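(* Let $\mathcal{S}$ be a discrete state space, $\mathcal{A}$ a finite action space, $\mathcal{R}=[-1,1]^{\mathcal{S}\times\mathcal{A}}$, $\Pi$ the set of functions $\mathcal{S}\to\mathcal{A}$, $\mathcal{P}$ the set of planners $p:\mathcal{R}\to\Pi$, and let $\dot\pi\in\Pi$. Let $L$ be a computer language (universal Turing machine) with Kolmogorov complexity $K_L$, let $c\ge 0$, and suppose $L$ is $c$-reasonable for $F$, i.e. $$\max_{(p,R)\in\mathcal{P}\times\mathcal{R},\ F_i\in F}\big(K_L(F_i(p,R))-K_L(p,R)\big)\le c.$$ Then each of the pairs $(p_{\dot\pi},0)$, $(p_g,R_{\dot\pi})$ and $(-p_g,-R_{\dot\pi})$ is compatible with $\dot\pi$ and is amongst the pairs of lowest complexity among the pairs compatible with $\dot\pi$, in the sense that for each such pair $(p',R')$, $$\Big|K_L(p',R')-\min_{(p,R)\in\mathcal{P}\times\mathcal{R}:\ p(R)=\dot\pi}K_L(p,R)\Big|\le c.$$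
   Context: A planner-reward pair $(p,R)$ is compatible with $\dot\pi$ if $p(R)=\dot\pi$. $K_L(x)$ denotes the length of the shortest program in $L$ that generates (a description of) the object $x$. Notation: $0$ is the zero reward; $p_\pi$ is the planner with $p_\pi(R)=\pi$ for all $R$; $R_\pi(s,a)=1$ if $\pi(s)=a$ and $0$ otherwise; $p_g(R)(s)=\arg\max_a R(s,a)$; for a planner $p$, $-p$ is the planner $(-p)(R)=p(-R)$; $-R$ is the pointwise negative of $R$. Basic operations: $f_1(p)=(p,0)$; $f_2(R)=(p_g,R)$; $f_3(p,R)=p(R)$; $f_4(p,R)=(-p,-R)$; $f_5(\pi)=p_\pi$; $f_6(\pi)=R_\pi$. The set $F=\{F_1,F_2,F_3,F_4\}$ consists of $F_1=f_1\circ f_5\circ f_3$, $F_2=f_2\circ f_6\circ f_3$, $F_3=f_4\circ f_2\circ f_6\circ f_3$, $F_4=f_4$, each mapping planner-reward pairs to planner-reward pairs. *)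

theory Defs
  imports Complex_Main
begin

type_synonym ('s,'a) reward = "'s \<Rightarrow> 'a \<Rightarrow> real"
type_synonym ('s,'a) policy = "'s \<Rightarrow> 'a"
type_synonym ('s,'a) planner = "('s,'a) reward \<Rightarrow> ('s,'a) policy"

definition rewards :: "('s,'a) reward set" where
  "rewards = {R. \<forall>s a. -1 \<le> R s a \<and> R s a \<le> 1}"

text \<open>Planners are functions from the reward space to policies; outside the reward
  space they are fixed to undefined, so that they are exactly functions on the reward space.\<close>
definition planners :: "('s,'a) planner set" where
  "planners = {p. \<forall>R. R \<notin> rewards \<longrightarrow> p R = undefined}"

definition zero_reward :: "('s,'a) reward" where
  "zero_reward = (\<lambda>s a. 0)"

definition p_pol :: "('s,'a) policy \<Rightarrow> ('s,'a) planner" where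
  "p_pol \<pi> = (\<lambda>R. if R \<in> rewards then \<pi> else undefined)"

definition R_pol :: "('s,'a) policy \<Rightarrow> ('s,'a) reward" where
  "R_pol \<pi> = (\<lambda>s a. if \<pi> s = a then 1 else 0)"

definition p_greedy :: "('s,'a) planner" where
  "p_greedy = (\<lambda>R. if R \<in> rewards then (\<lambda>s. arg_max (\<lambda>a. R s a) (\<lambda>_. True)) else undefined)"

definition neg_planner :: "('s,'a) planner \<Rightarrow> ('s,'a) planner" where
  "neg_planner p = (\<lambda>R. p (\<lambda>s a. - R s a))"

definition neg_reward :: "('s,'a) reward \<Rightarrow> ('s,'a) reward" where
  "neg_reward R = (\<lambda>s a. - R s a)"

definition f1 :: "('s,'a) planner \<Rightarrow> ('s,'a) planner \<times> ('s,'a) reward" where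
  "f1 p = (p, zero_reward)"
definition f2 :: "('s,'a) reward \<Rightarrow> ('s,'a) planner \<times> ('s,'a) reward" where
  "f2 R = (p_greedy, R)"
definition f3 :: "('s,'a) planner \<times> ('s,'a) reward \<Rightarrow> ('s,'a) policy" where
  "f3 pr = (fst pr) (snd pr)"
definition f4 :: "('s,'a) planner \<times> ('s,'a) reward \<Rightarrow> ('s,'a) planner \<times> ('s,'a) reward" where
  "f4 pr = (neg_planner (fst pr), neg_reward (snd pr))"
definition f5 :: "('s,'a) policy \<Rightarrow> ('s,'a) planner" where
  "f5 = p_pol"
definition f6 :: "('s,'a) policy \<Rightarrow> ('s,'a) reward" where
  "f6 = R_pol"

definition F1 where "F1 = f1 \<circ> f5 \<circ> f3"
definition F2 where "F2 = f2 \<circ> f6 \<circ> f3"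
definition F3 where "F3 = f4 \<circ> f2 \<circ> f6 \<circ> f3"
definition F4 where "F4 = f4"

definition Fset :: "(('s,'a) planner \<times> ('s,'a) reward \<Rightarrow> ('s,'a) planner \<times> ('s,'a) reward) set" where
  "Fset = {F1, F2, F3, F4}"

text \<open>Kolmogorov complexity K_L is modelled as an arbitrary function K from
  planner-reward pairs to nat. c-reasonableness: the max over (p,R) and F_i of
  K(F_i(p,R)) - K(p,R) is at most c, i.e. every such difference is at most c.\<close>
definition c_reasonable ::
  "(('s,'a) planner \<times> ('s,'a) reward \<Rightarrow> nat) \<Rightarrow> real \<Rightarrow> bool" where
  "c_reasonable K c \<longleftrightarrow>
     (\<forall>p\<in>planners. \<forall>R\<in>rewards. \<forall>F\<in>Fset. real (K (F (p, R))) - real (K (p, R)) \<le> c)"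

definition compatible :: "('s,'a) policy \<Rightarrow> ('s,'a) planner \<times> ('s,'a) reward \<Rightarrow> bool" where
  "compatible \<pi> pr \<longleftrightarrow> (fst pr) (snd pr) = \<pi>"

definition min_compatible_K ::
  "(('s,'a) planner \<times> ('s,'a) reward \<Rightarrow> nat) \<Rightarrow> ('s,'a) policy \<Rightarrow> nat" where
  "min_compatible_K K \<pi> = Inf (K ` {(p, R). p \<in> planners \<and> R \<in> rewards \<and> compatible \<pi> (p, R)})"

end

theory Submission
  imports Defs
begin

lemma neg_rewards: "R \<in> rewards \<Longrightarrow> (\<lambda>s a. - R s a) \<in> rewards"
  by (auto simp: rewards_def)

lemma greedy_R_pol: "p_greedy (R_pol (\<pi>::'s \<Rightarrow> 'a::finite)) = \<pi>"
proof -
  have rr: "R_pol \<pi> \<in> rewards" by (simp add: rewards_def R_pol_def)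
  have "\<And>s. arg_max (\<lambda>a. R_pol \<pi> s a) (\<lambda>_. True) = \<pi> s"
  proof -
    fix s
    have im: "is_arg_max (\<lambda>a. R_pol \<pi> s a) (\<lambda>_. True) x \<longleftrightarrow> x = \<pi> s" for x
      by (auto simp: is_arg_max_def R_pol_def)
    show "arg_max (\<lambda>a. R_pol \<pi> s a) (\<lambda>_. True) = \<pi> s"
      unfolding arg_max_def using im by (metis (mono_tags) someI_ex)
  qed
  then show ?thesis using rr by (simp add: p_greedy_def)
qed

theorem proposition3:
  fixes \<pi>d :: "'s \<Rightarrow> 'a::finite"
    and K :: "('s,'a) planner \<times> ('s,'a) reward \<Rightarrow> nat"
    and c :: real
  assumes "c \<ge> 0"
    and "c_reasonable K c"
  shows "\<forall>pr \<in> {(p_pol \<pi>d, zero_reward), (p_greedy, R_pol \<pi>d),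
                   (neg_planner p_greedy, neg_reward (R_pol \<pi>d))}.
           fst pr \<in> planners \<and> snd pr \<in> rewards \<and> compatible \<pi>d pr \<and>
           \<bar>real (K pr) - real (min_compatible_K K \<pi>d)\<bar> \<le> c"
proof -
  define S where "S = {(p, R). p \<in> planners \<and> R \<in> rewards \<and> compatible \<pi>d (p, R)}"
  have z: "(zero_reward :: ('s,'a) reward) \<in> rewards" by (simp add: rewards_def zero_reward_def)
  have rp: "R_pol \<pi>d \<in> rewards" by (simp add: rewards_def R_pol_def)
  have nrp: "neg_reward (R_pol \<pi>d) \<in> rewards"
    using neg_rewards[OF rp] by (simp add: neg_reward_def)
  have pp: "p_pol \<pi>d \<in> planners" by (simp add: planners_def p_pol_def)
  have pg: "(p_greedy :: ('s,'a) planner) \<in> planners" by (simp add: planners_def p_greedy_def)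
  have npg: "neg_planner (p_greedy :: ('s,'a) planner) \<in> planners"
  proof -
    have "R \<notin> rewards \<Longrightarrow> (\<lambda>s a. - R s a) \<notin> rewards" for R :: "('s,'a) reward"
      using neg_rewards[of "\<lambda>s a. - R s a"] by auto
    note hh = this
    have "neg_planner p_greedy R = undefined" if r: "R \<notin> rewards" for R :: "('s,'a) reward"
    proof -
      have "(\<lambda>s a. - R s a) \<notin> rewards" using hh r by blast
      then show ?thesis unfolding neg_planner_def p_greedy_def by simp
    qed
    then show ?thesis unfolding planners_def by blast
  qed
  have c1: "compatible \<pi>d (p_pol \<pi>d, zero_reward)"
    using z by (simp add: compatible_def p_pol_def)
  have c2: "compatible \<pi>d (p_greedy, R_pol \<pi>d)"
    by (simp add: compatible_def greedy_R_pol)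
  have nn: "neg_planner p_greedy (neg_reward (R_pol \<pi>d)) = p_greedy (R_pol \<pi>d)"
    by (simp add: neg_planner_def neg_reward_def)
  have c3: "compatible \<pi>d (neg_planner p_greedy, neg_reward (R_pol \<pi>d))"
    using nn by (simp add: compatible_def greedy_R_pol)
  have mem: "(p_pol \<pi>d, zero_reward) \<in> S" using pp z c1 by (simp add: S_def)
  have m: "min_compatible_K K \<pi>d = Inf (K ` S)" by (simp add: min_compatible_K_def S_def)
  obtain q where q: "q \<in> S" "K q = Inf (K ` S)"
    using mem by (metis (mono_tags, lifting) Inf_nat_def1 empty_iff image_iff)
  obtain p0 R0 where q0: "q = (p0, R0)" by fastforce
  have p0: "p0 \<in> planners" "R0 \<in> rewards" "p0 R0 = \<pi>d"
    using q(1) by (auto simp: S_def q0 compatible_def)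
  have lo: "x \<in> S \<Longrightarrow> K q \<le> K x" for x
    using q(2) by (simp add: cInf_lower)
  have b: "F \<in> Fset \<Longrightarrow> real (K (F (p0, R0))) - real (K q) \<le> c" for F
    using assms(2) p0 q0 by (simp add: c_reasonable_def)
  have e1: "F1 (p0, R0) = (p_pol \<pi>d, zero_reward)"
    using p0 by (simp add: F1_def f1_def f3_def f5_def)
  have e2: "F2 (p0, R0) = (p_greedy, R_pol \<pi>d)"
    using p0 by (simp add: F2_def f2_def f3_def f6_def)
  have e3: "F3 (p0, R0) = (neg_planner p_greedy, neg_reward (R_pol \<pi>d))"
    using p0 by (simp add: F3_def f2_def f3_def f6_def f4_def)
  have k1: "real (K (p_pol \<pi>d, zero_reward)) - real (K q) \<le> c"
    using b[of F1] e1 by (simp add: Fset_def)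
  have k2: "real (K (p_greedy, R_pol \<pi>d)) - real (K q) \<le> c"
    using b[of F2] e2 by (simp add: Fset_def)
  have k3: "real (K (neg_planner p_greedy, neg_reward (R_pol \<pi>d))) - real (K q) \<le> c"
    using b[of F3] e3 by (simp add: Fset_def)
  have l1: "K q \<le> K (p_pol \<pi>d, zero_reward)" using lo mem by blast
  have l2: "K q \<le> K (p_greedy, R_pol \<pi>d)" using lo pg rp c2 by (simp add: S_def)
  have l3: "K q \<le> K (neg_planner p_greedy, neg_reward (R_pol \<pi>d))"
    using lo npg nrp c3 by (simp add: S_def)
  show ?thesis
    using pp z c1 pg rp c2 npg nrp c3 k1 k2 k3 l1 l2 l3 m q(2)
    by (auto simp: abs_if)
qed

end
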